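(* Let $p_0,p_1,p_2$ be positive integers with $\gcd(p_0,p_1,p_2)=1$, and put $n=p_0+p_1+p_2$. Let $E=(\mathbb{Z}/n\mathbb{Z})\times\{0,1,2\}$ and define permutations $\sigma_0,\sigma_1$ of $E$ by $$\sigma_0(m,0)=(m,1),\quad \sigma_0(m,1)=(m,2),\quad \sigma_0(m,2)=(m,0),$$ $$\sigma_1(m,0)=(m-p_1,2),\quad \sigma_1(m,1)=(m-p_2,0),\quad \sigma_1(m,2)=(m-p_0,1),$$ with arithmetic in the first coordinate modulo $n$. Let $G=\langle\sigma_0,\sigma_1\rangle$, $N=\langle\sigma_0\sigma_1,\sigma_1\sigma_0\rangle$ and $H=\langle\sigma_0\rangle$. Then $NH=G$.
   Context: These $\sigma_0,\sigma_1$ are the monodromy permutations of the dessin drawn on the rational billiards surface of the triangle with angles $(p_0\pi/n,p_1\pi/n,p_2\pi/n)$, acting on its $3n$ edges labeled $(m,i)$; $G$ is its monodromy group. Products are composition of functions, and $NH=\{xh: x\in N,\ h\in H\}$. *)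

theory Defs
  imports "HOL-Algebra.Algebra"
begin

text \<open>Edges E = (Z/nZ) x {0,1,2}, with Z/nZ represented by {0..<n}.\<close>
definition edges :: "nat \<Rightarrow> (nat \<times> nat) set" where
  "edges n = {0..<n} \<times> {0..<3}"

text \<open>sigma_0: (m,i) maps to (m,i+1 mod 3); extensional (undefined outside E) as required by BijGroup.\<close>
definition sigma0 :: "nat \<Rightarrow> nat \<Rightarrow> nat \<Rightarrow> (nat \<times> nat \<Rightarrow> nat \<times> nat)" where
  "sigma0 p0 p1 p2 = (\<lambda>x \<in> edges (p0 + p1 + p2). (fst x, (snd x + 1) mod 3))"

definition sigma1 :: "nat \<Rightarrow> nat \<Rightarrow> nat \<Rightarrow> (nat \<times> nat \<Rightarrow> nat \<times> nat)" where
  "sigma1 p0 p1 p2 = (let n = p0 + p1 + p2 in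
     (\<lambda>x \<in> edges n. (case x of
        (m, 0) \<Rightarrow> ((m + n - p1) mod n, 2)
      | (m, Suc 0) \<Rightarrow> ((m + n - p2) mod n, 0)
      | (m, _) \<Rightarrow> ((m + n - p0) mod n, 1))))"

end

theory Submission
  imports Defs
begin

lemma (in group) inv_canc1 [simp]:
  "x \<in> carrier G \<Longrightarrow> y \<in> carrier G \<Longrightarrow> inv x \<otimes> (x \<otimes> y) = y"
  by (simp add: m_assoc[symmetric])

lemma (in group) inv_canc2 [simp]:
  "x \<in> carrier G \<Longrightarrow> y \<in> carrier G \<Longrightarrow> x \<otimes> (inv x \<otimes> y) = y"
  by (simp add: m_assoc[symmetric])

lemma (in group) conj_gen:
  assumes ab: "a \<in> carrier G" "b \<in> carrier G" and f: "f \<in> carrier G"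
    and ca: "f \<otimes> a \<otimes> inv f \<in> generate G {a,b}"
    and cb: "f \<otimes> b \<otimes> inv f \<in> generate G {a,b}"
    and n: "n \<in> generate G {a,b}"
  shows "f \<otimes> n \<otimes> inv f \<in> generate G {a,b}"
  using n
proof (induction rule: generate.induct)
  case one
  then show ?case using f by (simp add: generate.one)
next
  case (incl h)
  then show ?case using ca cb by auto
next
  case (inv h)
  then have hc: "h \<in> carrier G" using ab by auto
  have "f \<otimes> inv h \<otimes> inv f = inv (f \<otimes> h \<otimes> inv f)"
    using hc f by (simp add: inv_mult_group m_assoc)
  moreover have "f \<otimes> h \<otimes> inv f \<in> generate G {a,b}" using inv ca cb by auto
  ultimately show ?case using generate_m_inv_closed[of "{a,b}"] ab by auto
next
  case (eng h1 h2)
  have c: "h1 \<in> carrier G" "h2 \<in> carrier G"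
    using eng.hyps generate_in_carrier[of "{a,b}"] ab by auto
  have "f \<otimes> (h1 \<otimes> h2) \<otimes> inv f = (f \<otimes> h1 \<otimes> inv f) \<otimes> (f \<otimes> h2 \<otimes> inv f)"
    using c f by (simp add: m_assoc)
  then show ?case using eng.IH generate.eng by metis
qed

lemma (in group) main_abs:
  assumes x: "x \<in> carrier G" and y: "y \<in> carrier G"
    and x3: "x \<otimes> x \<otimes> x = \<one>" and y3: "y \<otimes> y \<otimes> y = \<one>"
  shows "generate G {x \<otimes> y, y \<otimes> x} <#> generate G {x} = generate G {x,y}"
proof -
  define N where "N = generate G {x \<otimes> y, y \<otimes> x}"
  define H where "H = generate G {x}"
  define K where "K = generate G {x,y}"
  have invx: "inv x = x \<otimes> x"
    using x x3 by (metis inv_equality m_assoc m_closed)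
  have invy: "inv y = y \<otimes> y"
    using y y3 by (metis inv_equality m_assoc m_closed)
  have sN: "{x \<otimes> y, y \<otimes> x} \<subseteq> carrier G" using x y by auto
  have Nc: "N \<subseteq> carrier G" unfolding N_def using generate_incl[OF sN] .
  have Hc: "H \<subseteq> carrier G" unfolding H_def using generate_incl x by auto
  have aN: "x \<otimes> y \<in> N" and bN: "y \<otimes> x \<in> N" unfolding N_def by (auto intro: generate.incl)
  have iN: "inv n \<in> N" if "n \<in> N" for n
    using that generate_m_inv_closed[OF sN] unfolding N_def by auto
  have mN: "n \<otimes> m \<in> N" if "n \<in> N" "m \<in> N" for n m
    using that unfolding N_def by (rule generate.eng)
  have key: "x \<otimes> (x \<otimes> y) \<otimes> inv x = inv (y \<otimes> x) \<otimes> inv (x \<otimes> y)"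
  proof -
    have "inv (y \<otimes> x) \<otimes> inv (x \<otimes> y) = inv x \<otimes> (inv y \<otimes> inv y) \<otimes> inv x"
      using x y by (simp add: inv_mult_group m_assoc)
    also have "inv y \<otimes> inv y = y" using y y3 invy by (simp add: m_assoc)
    finally show ?thesis using x y invx by (simp add: m_assoc)
  qed
  have key2: "inv x \<otimes> (y \<otimes> x) \<otimes> inv (inv x) = inv (y \<otimes> x) \<otimes> inv (x \<otimes> y)"
  proof -
    have "inv (y \<otimes> x) \<otimes> inv (x \<otimes> y) = inv x \<otimes> (inv y \<otimes> inv y) \<otimes> inv x"
      using x y by (simp add: inv_mult_group m_assoc)
    also have "inv y \<otimes> inv y = y" using y y3 invy by (simp add: m_assoc)
    also have "inv x \<otimes> y \<otimes> inv x = inv x \<otimes> y \<otimes> x \<otimes> x" using invx x y by (simp add: m_assoc)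
    finally show ?thesis using x y by (simp add: m_assoc)
  qed
  have c1: "x \<otimes> n \<otimes> inv x \<in> N" if "n \<in> N" for n
    unfolding N_def
  proof (rule conj_gen)
    show "x \<otimes> (x \<otimes> y) \<otimes> inv x \<in> generate G {x \<otimes> y, y \<otimes> x}"
      using key iN aN bN mN unfolding N_def by simp
    show "x \<otimes> (y \<otimes> x) \<otimes> inv x \<in> generate G {x \<otimes> y, y \<otimes> x}"
      using aN x y unfolding N_def by (simp add: m_assoc)
  qed (use x y that N_def in auto)
  have c2: "inv x \<otimes> n \<otimes> x \<in> N" if "n \<in> N" for n
  proof -
    have "inv x \<otimes> n \<otimes> inv (inv x) \<in> N"
      unfolding N_def
    proof (rule conj_gen)
      show "inv x \<otimes> (x \<otimes> y) \<otimes> inv (inv x) \<in> generate G {x \<otimes> y, y \<otimes> x}"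
        using bN x y unfolding N_def by (simp add: m_assoc)
      show "inv x \<otimes> (y \<otimes> x) \<otimes> inv (inv x) \<in> generate G {x \<otimes> y, y \<otimes> x}"
        using key2 iN aN bN mN unfolding N_def by simp
    qed (use x y that N_def in auto)
    then show ?thesis using x by simp
  qed
  have xH: "x \<in> H" and ixH: "inv x \<in> H" unfolding H_def by (auto intro: generate.incl generate.inv)
  have mH: "h \<otimes> k \<in> H" if "h \<in> H" "k \<in> H" for h k
    using that unfolding H_def by (rule generate.eng)
  have NH: "N <#> H = (\<Union>n\<in>N. \<Union>h\<in>H. {n \<otimes> h})" by (simp add: set_mult_def)
  have stepx: "x \<otimes> z \<in> N <#> H" if zz: "z \<in> N <#> H" for z
  proof -
    obtain n h where nh: "n \<in> N" "h \<in> H" "z = n \<otimes> h" using zz NH by auto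
    have nc: "n \<in> carrier G" "h \<in> carrier G" using nh Nc Hc by auto
    have "x \<otimes> z = (x \<otimes> n \<otimes> inv x) \<otimes> (x \<otimes> h)"
      using nh(3) nc x by (simp add: m_assoc)
    then show ?thesis using c1[OF nh(1)] mH[OF xH nh(2)] NH by auto
  qed
  have stepy: "y \<otimes> z \<in> N <#> H" if zz: "z \<in> N <#> H" for z
  proof -
    obtain n h where nh: "n \<in> N" "h \<in> H" "z = n \<otimes> h" using zz NH by auto
    have nc: "n \<in> carrier G" "h \<in> carrier G" using nh Nc Hc by auto
    have "y \<otimes> z = ((y \<otimes> x) \<otimes> (inv x \<otimes> n \<otimes> x)) \<otimes> (inv x \<otimes> h)"
      using nh(3) nc x y by (simp add: m_assoc)
    then show ?thesis using mN[OF bN c2[OF nh(1)]] mH[OF ixH nh(2)] NH by auto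
  qed
  have one_NH: "\<one> \<in> N <#> H"
  proof -
    have "\<one> \<in> N" "\<one> \<in> H" unfolding N_def H_def by (auto intro: generate.one)
    then show ?thesis using NH by force
  qed
  have NHc: "N <#> H \<subseteq> carrier G" using NH Nc Hc by auto
  have gen: "\<forall>z \<in> N <#> H. g \<otimes> z \<in> N <#> H" if "g \<in> K" for g
    using that unfolding K_def
  proof (induction rule: generate.induct)
    case one
    then show ?case using NHc by auto
  next
    case (incl h)
    then show ?case using stepx stepy by auto
  next
    case (inv h)
    then have "inv h = h \<otimes> h" using invx invy by auto
    moreover have "h \<in> carrier G" using inv x y by auto
    ultimately show ?case
    proof (intro ballI)
      fix z assume z: "z \<in> N <#> H"
      have zc: "z \<in> carrier G" using z NHc by auto
      have "h \<otimes> (h \<otimes> z) \<in> N <#> H" using inv.hyps z stepx stepy by auto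
      then show "inv h \<otimes> z \<in> N <#> H" using \<open>inv h = h \<otimes> h\<close> \<open>h \<in> carrier G\<close> zc
        by (simp add: m_assoc)
    qed
  next
    case (eng h1 h2)
    have c: "h1 \<in> carrier G" "h2 \<in> carrier G"
      using eng.hyps generate_in_carrier[of "{x,y}"] x y by auto
    show ?case
    proof (intro ballI)
      fix z assume z: "z \<in> N <#> H"
      have zc: "z \<in> carrier G" using z NHc by auto
      have "h1 \<otimes> (h2 \<otimes> z) \<in> N <#> H" using eng.IH z by blast
      then show "h1 \<otimes> h2 \<otimes> z \<in> N <#> H" using c zc by (simp add: m_assoc)
    qed
  qed
  have sub1: "K \<subseteq> N <#> H"
  proof
    fix g assume g: "g \<in> K"
    have "g \<in> carrier G" using g generate_in_carrier[of "{x,y}"] x y unfolding K_def by auto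
    then show "g \<in> N <#> H" using gen[OF g] one_NH by force
  qed
  have NK: "N \<subseteq> K"
  proof -
    have "x \<otimes> y \<in> K" "y \<otimes> x \<in> K" unfolding K_def by (auto intro: generate.incl generate.eng)
    then have "{x \<otimes> y, y \<otimes> x} \<subseteq> K" by auto
    moreover have "subgroup K G" unfolding K_def using generate_is_subgroup x y by auto
    ultimately show ?thesis unfolding N_def using generate_subgroup_incl by auto
  qed
  have HK: "H \<subseteq> K" unfolding H_def K_def by (rule mono_generate) auto
  have sub2: "N <#> H \<subseteq> K"
  proof
    fix z assume "z \<in> N <#> H"
    then obtain n h where nh: "n \<in> N" "h \<in> H" "z = n \<otimes> h" using NH by auto
    have "n \<in> K" "h \<in> K" using nh NK HK by auto
    then show "z \<in> K" unfolding nh(3) K_def by (rule generate.eng)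
  qed
  show ?thesis using sub1 sub2 unfolding N_def H_def K_def by auto
qed

lemma order3_bij:
  assumes "f \<in> extensional E" "\<forall>x\<in>E. f x \<in> E" "\<forall>x\<in>E. f (f (f x)) = x"
  shows "f \<in> carrier (BijGroup E)"
    "f \<otimes>\<^bsub>BijGroup E\<^esub> f \<otimes>\<^bsub>BijGroup E\<^esub> f = \<one>\<^bsub>BijGroup E\<^esub>"
proof -
  have "inj_on f E"
  proof (rule inj_onI)
    fix a b assume "a \<in> E" "b \<in> E" "f a = f b"
    then show "a = b" using assms(3) by metis
  qed
  moreover have "f ` E = E"
  proof
    show "f ` E \<subseteq> E" using assms(2) by auto
    show "E \<subseteq> f ` E"
    proof
      fix y assume y: "y \<in> E"
      then have "y = f (f (f y))" using assms(3) by auto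
      moreover have "f (f y) \<in> E" using y assms(2) by auto
      ultimately show "y \<in> f ` E" by blast
    qed
  qed
  ultimately have B: "f \<in> Bij E" using assms(1) unfolding Bij_def bij_betw_def by blast
  then show "f \<in> carrier (BijGroup E)" by (simp add: BijGroup_def)
  have C: "compose E f f \<in> Bij E" by (rule compose_Bij[OF B B])
  show "f \<otimes>\<^bsub>BijGroup E\<^esub> f \<otimes>\<^bsub>BijGroup E\<^esub> f = \<one>\<^bsub>BijGroup E\<^esub>"
    using B C assms(2,3) by (auto simp add: BijGroup_def compose_def fun_eq_iff)
qed

lemma mod3:
  fixes m n a b c :: nat
  assumes "m < n" "a + b + c = n"
  shows "(((m + n - a) mod n + n - b) mod n + n - c) mod n = m"
proof -
  have e1: "(m + n - a) mod n + n - b = (m + n - a) mod n + (n - b)" using assms by auto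
  have e2: "((m + n - a) mod n + (n - b)) mod n = (m + n - a + (n - b)) mod n"
    by (simp add: mod_add_left_eq)
  have e3: "(m + n - a + (n - b)) mod n + n - c = (m + n - a + (n - b)) mod n + (n - c)" using assms by auto
  have e4: "((m + n - a + (n - b)) mod n + (n - c)) mod n = (m + n - a + (n - b) + (n - c)) mod n"
    by (simp add: mod_add_left_eq)
  have e5: "m + n - a + (n - b) + (n - c) = m + n * 2" using assms by auto
  show ?thesis using e1 e2 e3 e4 e5 assms by simp
qed

theorem lemma6:
  fixes p0 p1 p2 :: nat
  assumes "p0 > 0" "p1 > 0" "p2 > 0"
    and "gcd p0 (gcd p1 p2) = 1"
  defines "n \<equiv> p0 + p1 + p2"
  defines "S \<equiv> BijGroup (edges n)"
  defines "s0 \<equiv> sigma0 p0 p1 p2" and "s1 \<equiv> sigma1 p0 p1 p2"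
  defines "G \<equiv> generate S {s0, s1}"
    and "N \<equiv> generate S {s0 \<otimes>\<^bsub>S\<^esub> s1, s1 \<otimes>\<^bsub>S\<^esub> s0}"
    and "H \<equiv> generate S {s0}"
  shows "N <#>\<^bsub>S\<^esub> H = G"
proof -
  have grp: "group S" unfolding S_def by (rule group_BijGroup)
  have npos: "n > 0" using assms(1) n_def by auto
  have ex0: "s0 \<in> extensional (edges n)" unfolding s0_def sigma0_def n_def by simp
  have in0: "\<forall>x\<in>edges n. s0 x \<in> edges n"
    unfolding s0_def sigma0_def n_def[symmetric] by (auto simp: edges_def)
  have tr0: "\<forall>x\<in>edges n. s0 (s0 (s0 x)) = x"
  proof
    fix x assume "x \<in> edges n"
    then obtain m i where x: "x = (m, i)" "m < n" "i < 3" by (auto simp: edges_def)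
    have "i = 0 \<or> i = 1 \<or> i = 2" using x by auto
    then show "s0 (s0 (s0 x)) = x"
      using x unfolding s0_def sigma0_def n_def[symmetric] by (auto simp: edges_def)
  qed
  have ex1: "s1 \<in> extensional (edges n)" unfolding s1_def sigma1_def n_def Let_def by simp
  have v1: "s1 (m, i) = (if i = 0 then ((m + n - p1) mod n, 2) else if i = 1 then ((m + n - p2) mod n, 0)
      else ((m + n - p0) mod n, 1))" if "m < n" "i < 3" for m i
    using that unfolding s1_def sigma1_def n_def[symmetric] Let_def
    by (cases i) (auto simp: edges_def split: nat.split)
  have in1: "\<forall>x\<in>edges n. s1 x \<in> edges n"
    using v1 npos by (auto simp: edges_def)
  have tr1: "\<forall>x\<in>edges n. s1 (s1 (s1 x)) = x"
  proof
    fix x assume "x \<in> edges n"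
    then obtain m i where x: "x = (m, i)" "m < n" "i < 3" by (auto simp: edges_def)
    have s: "p1 + p0 + p2 = n" "p2 + p1 + p0 = n" "p0 + p2 + p1 = n" using n_def by auto
    have "i = 0 \<or> i = 1 \<or> i = 2" using x by auto
    then show "s1 (s1 (s1 x)) = x"
      using x npos v1 mod3[OF x(2) s(1)] mod3[OF x(2) s(2)] mod3[OF x(2) s(3)] by auto
  qed
  note o0 = order3_bij[OF ex0 in0 tr0, folded S_def]
  note o1 = order3_bij[OF ex1 in1 tr1, folded S_def]
  show ?thesis unfolding N_def H_def G_def
    using group.main_abs[OF grp o0(1) o1(1) o0(2) o1(2)] .
qed

end
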